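(* Let $\mathfrak{g}_\alpha$, $-1\le\alpha\le1$, be the eight-dimensional real Lie algebras with basis $\{X_1,\dots,X_8\}$ and nonzero brackets $[X_1,X_2]=2X_2$, $[X_1,X_3]=-2X_3$, $[X_2,X_3]=X_1$, $[X_1,X_4]=X_4$, $[X_1,X_5]=-X_5$, $[X_1,X_6]=X_6$, $[X_1,X_7]=-X_7$, $[X_2,X_5]=X_4$, $[X_2,X_7]=X_6$, $[X_3,X_4]=X_5$, $[X_3,X_6]=X_7$, $[X_4,X_8]=X_4$, $[X_5,X_8]=X_5$, $[X_6,X_8]=\alpha X_6$, $[X_7,X_8]=\alpha X_7$. For every $-1<\alpha\le1$, the Lie algebra $\mathfrak{g}_{-1}$ is a linear deformation of $\mathfrak{g}_\alpha$. Moreover this deformation generates two non-constant invariants for the coadjoint representation, i.e. $\mathcal{N}(\mathfrak{g}_\alpha)=0$ while $\mathcal{N}(\mathfrak{g}_{-1})=2$.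
   Context: A linear deformation of a Lie algebra $\mathfrak{g}$ with bracket $[\cdot,\cdot]$ is a Lie algebra structure on the same vector space of the form $[X,Y]_t=[X,Y]+t\,\varphi(X,Y)$, with $t$ a scalar and $\varphi$ a skew-symmetric bilinear map (an integrable 2-cocycle with values in the adjoint module) such that $[\cdot,\cdot]_t$ satisfies the Jacobi identity. For a Lie algebra $\mathfrak{g}$ with basis $\{X_1,\dots,X_n\}$, structure constants $[X_i,X_j]=C_{ij}^kX_k$ and dual coordinates $x_1,\dots,x_n$, the number of functionally independent invariants of the coadjoint representation (solutions $F$ of the system $C_{ij}^k x_k\,\partial F/\partial x_j=0$, $1\le i\le n$) is $\mathcal{N}(\mathfrak{g})=\dim\mathfrak{g}-\operatorname{rank}(C_{ij}^kx_k)$, the rank being the generic rank of the antisymmetric matrix with entries $C_{ij}^kx_k$. *)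

theory Defs
  imports "Jordan_Normal_Form.DL_Rank"
begin

text \<open>The Lie algebras g_alpha (alpha real) with basis X_1,...,X_8, encoded by
  structure constants: sc a i j k is the coefficient of X_k in [X_i,X_j] for i < j
  (only the brackets listed in the paper are nonzero).\<close>

definition sc_upper :: "real \<Rightarrow> nat \<Rightarrow> nat \<Rightarrow> nat \<Rightarrow> real" where
  "sc_upper a i j k =
    (if (i,j,k) = (1,2,2) then 2
     else if (i,j,k) = (1,3,3) then -2
     else if (i,j,k) = (2,3,1) then 1
     else if (i,j,k) = (1,4,4) then 1
     else if (i,j,k) = (1,5,5) then -1
     else if (i,j,k) = (1,6,6) then 1
     else if (i,j,k) = (1,7,7) then -1
     else if (i,j,k) = (2,5,4) then 1
     else if (i,j,k) = (2,7,6) then 1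
     else if (i,j,k) = (3,4,5) then 1
     else if (i,j,k) = (3,6,7) then 1
     else if (i,j,k) = (4,8,4) then 1
     else if (i,j,k) = (5,8,5) then 1
     else if (i,j,k) = (6,8,6) then a
     else if (i,j,k) = (7,8,7) then a
     else 0)"

definition sc :: "real \<Rightarrow> nat \<Rightarrow> nat \<Rightarrow> nat \<Rightarrow> real" where
  "sc a i j k = (if i < j then sc_upper a i j k
                 else if j < i then - sc_upper a j i k else 0)"

abbreviation idx :: "nat set" where "idx \<equiv> {1..8}"

definition skew8 :: "(nat \<Rightarrow> nat \<Rightarrow> nat \<Rightarrow> real) \<Rightarrow> bool" where
  "skew8 D \<longleftrightarrow> (\<forall>i\<in>idx. \<forall>j\<in>idx. \<forall>k\<in>idx. D i j k = - D j i k)"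

definition jacobi8 :: "(nat \<Rightarrow> nat \<Rightarrow> nat \<Rightarrow> real) \<Rightarrow> bool" where
  "jacobi8 D \<longleftrightarrow> (\<forall>i\<in>idx. \<forall>j\<in>idx. \<forall>k\<in>idx. \<forall>m\<in>idx.
     (\<Sum>l\<in>idx. D i j l * D l k m + D j k l * D l i m + D k i l * D l j m) = 0)"

definition lie8 :: "(nat \<Rightarrow> nat \<Rightarrow> nat \<Rightarrow> real) \<Rightarrow> bool" where
  "lie8 D \<longleftrightarrow> skew8 D \<and> jacobi8 D"

definition linear_deformation8 ::
  "(nat \<Rightarrow> nat \<Rightarrow> nat \<Rightarrow> real) \<Rightarrow> (nat \<Rightarrow> nat \<Rightarrow> nat \<Rightarrow> real) \<Rightarrow> bool" where
  "linear_deformation8 D' D \<longleftrightarrow>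
     (\<exists>phi :: nat \<Rightarrow> nat \<Rightarrow> nat \<Rightarrow> real. skew8 phi \<and>
        (\<forall>t::real. lie8 (\<lambda>i j k. D i j k + t * phi i j k)) \<and>
        (\<exists>t::real. \<forall>i\<in>idx. \<forall>j\<in>idx. \<forall>k\<in>idx. D' i j k = D i j k + t * phi i j k))"

text \<open>The matrix (C_ij^k x_k)_{i,j} (0-based JNF indices, so entry (i,j) corresponds to X_{i+1},X_{j+1}).\<close>
definition coadj_mat :: "(nat \<Rightarrow> nat \<Rightarrow> nat \<Rightarrow> real) \<Rightarrow> (nat \<Rightarrow> real) \<Rightarrow> real mat" where
  "coadj_mat D x = mat 8 8 (\<lambda>(i,j). \<Sum>k\<in>idx. D (i+1) (j+1) k * x k)"

text \<open>Number of functionally independent coadjoint invariants: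
  dim g minus the generic (i.e. maximal) rank of (C_ij^k x_k).\<close>
definition Ninv :: "(nat \<Rightarrow> nat \<Rightarrow> nat \<Rightarrow> real) \<Rightarrow> nat" where
  "Ninv D = 8 - Max {vec_space.rank 8 (coadj_mat D x) | x. True}"

end

theory Submission
  imports Defs
begin

lemma ball8: "(\<forall>i\<in>{1..8::nat}. P i) \<longleftrightarrow> P 1 \<and> P 2 \<and> P 3 \<and> P 4 \<and> P 5 \<and> P 6 \<and> P 7 \<and> P 8"
proof -
  have "{1..8::nat} = {1,2,3,4,5,6,7,8}" by auto
  then show ?thesis by simp
qed

lemma sum8: "(\<Sum>l\<in>{1..8::nat}. f l) = f 1 + f 2 + f 3 + f 4 + f 5 + f 6 + f 7 + f 8"
proof -
  have "{1..8::nat} = {1,2,3,4,5,6,7,8}" by auto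
  then show ?thesis by (simp add: algebra_simps)
qed

lemma sum_lt8: "(\<Sum>l\<in>{0..<8::nat}. f l) = f 0 + f 1 + f 2 + f 3 + f 4 + f 5 + f 6 + f 7"
proof -
  have "{0..<8::nat} = {0,1,2,3,4,5,6,7}" by auto
  then show ?thesis by (simp add: algebra_simps)
qed

lemma less8: "(r::nat) < 8 \<Longrightarrow> r = 0 \<or> r = 1 \<or> r = 2 \<or> r = 3 \<or> r = 4 \<or> r = 5 \<or> r = 6 \<or> r = 7"
  by auto

lemma rank_le_sum:
  fixes A :: "real mat" and f g :: "nat \<Rightarrow> nat \<Rightarrow> real"
  assumes "A \<in> carrier_mat n n"
    and "\<And>r c. r < n \<Longrightarrow> c < n \<Longrightarrow> A $$ (r,c) = (\<Sum>k<m. f k r * g k c)"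
  shows "vec_space.rank n A \<le> m"
  using assms
proof (induction m arbitrary: A)
  case 0
  then have "A = 0\<^sub>m n n" by (intro eq_matI) auto
  then show ?case using vec_space.rank_0I by (metis le_refl)
next
  case (Suc m)
  define B where "B = mat n n (\<lambda>(r,c). \<Sum>k<m. f k r * g k c)"
  define C where "C = mat n n (\<lambda>(r,c). f m r * g m c)"
  have AB: "A = B + C" by (rule eq_matI) (use Suc.prems in \<open>auto simp: B_def C_def\<close>)
  have "vec_space.rank n B \<le> m" by (rule Suc.IH) (auto simp: B_def)
  moreover have "vec_space.rank n C \<le> 1"
    by (rule vec_space.rank_le_1_product_entries[of C n n "f m" "g m"]) (auto simp: C_def)
  moreover have "vec_space.rank n (B + C) \<le> vec_space.rank n B + vec_space.rank n C"
    by (rule vec_space.rank_subadditive) (auto simp: B_def C_def)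
  ultimately show ?case using AB by simp
qed

lemma rank_le_wedges:
  fixes A :: "real mat" and ua wa ub wb uc wc :: "nat \<Rightarrow> real"
  assumes "A \<in> carrier_mat n n"
    and "\<And>r c. r < n \<Longrightarrow> c < n \<Longrightarrow> A $$ (r,c) =
       ua r * wa c - wa r * ua c + ub r * wb c - wb r * ub c + uc r * wc c - wc r * uc c"
  shows "vec_space.rank n A \<le> 6"
proof (rule rank_le_sum[OF assms(1), where f = "\<lambda>k. [ua, \<lambda>r. - wa r, ub, \<lambda>r. - wb r, uc, \<lambda>r. - wc r] ! k"
      and g = "\<lambda>k. [wa, ua, wb, ub, wc, uc] ! k"])
  fix r c assume "r < n" "c < n"
  then show "A $$ (r,c) = (\<Sum>k<6. ([ua, \<lambda>r. - wa r, ub, \<lambda>r. - wb r, uc, \<lambda>r. - wc r] ! k) r * ([wa, ua, wb, ub, wc, uc] ! k) c)"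
    using assms(2) by (simp add: numeral_eq_Suc)
qed

lemma rank_full:
  fixes A :: "real mat"
  assumes "A \<in> carrier_mat n n"
    and "\<And>v. v \<in> carrier_vec n \<Longrightarrow> A *\<^sub>v v = 0\<^sub>v n \<Longrightarrow> v = 0\<^sub>v n"
  shows "vec_space.rank n A = n"
proof -
  have "det A \<noteq> 0" using det_0_iff_vec_prod_zero_field[OF assms(1)] assms(2) by blast
  then show ?thesis using vec_space.low_rank_det_zero[OF assms(1)] by blast
qed

lemma coadj_carrier: "coadj_mat D x \<in> carrier_mat 8 8"
  by (simp add: coadj_mat_def)

lemma coadj_ent: "i < 8 \<Longrightarrow> j < 8 \<Longrightarrow> coadj_mat D x $$ (i,j) = (\<Sum>k\<in>idx. D (i+1) (j+1) k * x k)"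
  by (simp add: coadj_mat_def)

lemma mulvec_eq: assumes "A \<in> carrier_mat 8 8" "v \<in> carrier_vec 8" "A *\<^sub>v v = 0\<^sub>v 8" "r < 8"
  shows "A $$ (r,0) * v$0 + A $$ (r,1) * v$1 + A $$ (r,2) * v$2 + A $$ (r,3) * v$3
       + A $$ (r,4) * v$4 + A $$ (r,5) * v$5 + A $$ (r,6) * v$6 + A $$ (r,7) * v$7 = 0"
proof -
  have "0 = (A *\<^sub>v v) $ r" using assms by simp
  also have "\<dots> = (\<Sum>i\<in>{0..<8}. A $$ (r,i) * v $ i)" using assms(1,2,4) by (simp add: scalar_prod_def)
  finally show ?thesis by (simp only: sum_lt8)
qed

lemma sc_tab:
  "sc b 1 1 1 = 0"
  "sc b 1 1 2 = 0"
  "sc b 1 1 3 = 0"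
  "sc b 1 1 4 = 0"
  "sc b 1 1 5 = 0"
  "sc b 1 1 6 = 0"
  "sc b 1 1 7 = 0"
  "sc b 1 1 8 = 0"
  "sc b 1 2 1 = 0"
  "sc b 1 2 2 = 2"
  "sc b 1 2 3 = 0"
  "sc b 1 2 4 = 0"
  "sc b 1 2 5 = 0"
  "sc b 1 2 6 = 0"
  "sc b 1 2 7 = 0"
  "sc b 1 2 8 = 0"
  "sc b 1 3 1 = 0"
  "sc b 1 3 2 = 0"
  "sc b 1 3 3 = -2"
  "sc b 1 3 4 = 0"
  "sc b 1 3 5 = 0"
  "sc b 1 3 6 = 0"
  "sc b 1 3 7 = 0"
  "sc b 1 3 8 = 0"
  "sc b 1 4 1 = 0"
  "sc b 1 4 2 = 0"
  "sc b 1 4 3 = 0"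
  "sc b 1 4 4 = 1"
  "sc b 1 4 5 = 0"
  "sc b 1 4 6 = 0"
  "sc b 1 4 7 = 0"
  "sc b 1 4 8 = 0"
  "sc b 1 5 1 = 0"
  "sc b 1 5 2 = 0"
  "sc b 1 5 3 = 0"
  "sc b 1 5 4 = 0"
  "sc b 1 5 5 = -1"
  "sc b 1 5 6 = 0"
  "sc b 1 5 7 = 0"
  "sc b 1 5 8 = 0"
  "sc b 1 6 1 = 0"
  "sc b 1 6 2 = 0"
  "sc b 1 6 3 = 0"
  "sc b 1 6 4 = 0"
  "sc b 1 6 5 = 0"
  "sc b 1 6 6 = 1"
  "sc b 1 6 7 = 0"
  "sc b 1 6 8 = 0"
  "sc b 1 7 1 = 0"
  "sc b 1 7 2 = 0"
  "sc b 1 7 3 = 0"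
  "sc b 1 7 4 = 0"
  "sc b 1 7 5 = 0"
  "sc b 1 7 6 = 0"
  "sc b 1 7 7 = -1"
  "sc b 1 7 8 = 0"
  "sc b 1 8 1 = 0"
  "sc b 1 8 2 = 0"
  "sc b 1 8 3 = 0"
  "sc b 1 8 4 = 0"
  "sc b 1 8 5 = 0"
  "sc b 1 8 6 = 0"
  "sc b 1 8 7 = 0"
  "sc b 1 8 8 = 0"
  "sc b 2 1 1 = 0"
  "sc b 2 1 2 = - 2"
  "sc b 2 1 3 = 0"
  "sc b 2 1 4 = 0"
  "sc b 2 1 5 = 0"
  "sc b 2 1 6 = 0"
  "sc b 2 1 7 = 0"
  "sc b 2 1 8 = 0"
  "sc b 2 2 1 = 0"
  "sc b 2 2 2 = 0"
  "sc b 2 2 3 = 0"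
  "sc b 2 2 4 = 0"
  "sc b 2 2 5 = 0"
  "sc b 2 2 6 = 0"
  "sc b 2 2 7 = 0"
  "sc b 2 2 8 = 0"
  "sc b 2 3 1 = 1"
  "sc b 2 3 2 = 0"
  "sc b 2 3 3 = 0"
  "sc b 2 3 4 = 0"
  "sc b 2 3 5 = 0"
  "sc b 2 3 6 = 0"
  "sc b 2 3 7 = 0"
  "sc b 2 3 8 = 0"
  "sc b 2 4 1 = 0"
  "sc b 2 4 2 = 0"
  "sc b 2 4 3 = 0"
  "sc b 2 4 4 = 0"
  "sc b 2 4 5 = 0"
  "sc b 2 4 6 = 0"
  "sc b 2 4 7 = 0"
  "sc b 2 4 8 = 0"
  "sc b 2 5 1 = 0"
  "sc b 2 5 2 = 0"
  "sc b 2 5 3 = 0"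
  "sc b 2 5 4 = 1"
  "sc b 2 5 5 = 0"
  "sc b 2 5 6 = 0"
  "sc b 2 5 7 = 0"
  "sc b 2 5 8 = 0"
  "sc b 2 6 1 = 0"
  "sc b 2 6 2 = 0"
  "sc b 2 6 3 = 0"
  "sc b 2 6 4 = 0"
  "sc b 2 6 5 = 0"
  "sc b 2 6 6 = 0"
  "sc b 2 6 7 = 0"
  "sc b 2 6 8 = 0"
  "sc b 2 7 1 = 0"
  "sc b 2 7 2 = 0"
  "sc b 2 7 3 = 0"
  "sc b 2 7 4 = 0"
  "sc b 2 7 5 = 0"
  "sc b 2 7 6 = 1"
  "sc b 2 7 7 = 0"
  "sc b 2 7 8 = 0"
  "sc b 2 8 1 = 0"
  "sc b 2 8 2 = 0"
  "sc b 2 8 3 = 0"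
  "sc b 2 8 4 = 0"
  "sc b 2 8 5 = 0"
  "sc b 2 8 6 = 0"
  "sc b 2 8 7 = 0"
  "sc b 2 8 8 = 0"
  "sc b 3 1 1 = 0"
  "sc b 3 1 2 = 0"
  "sc b 3 1 3 = 2"
  "sc b 3 1 4 = 0"
  "sc b 3 1 5 = 0"
  "sc b 3 1 6 = 0"
  "sc b 3 1 7 = 0"
  "sc b 3 1 8 = 0"
  "sc b 3 2 1 = - 1"
  "sc b 3 2 2 = 0"
  "sc b 3 2 3 = 0"
  "sc b 3 2 4 = 0"
  "sc b 3 2 5 = 0"
  "sc b 3 2 6 = 0"
  "sc b 3 2 7 = 0"
  "sc b 3 2 8 = 0"
  "sc b 3 3 1 = 0"
  "sc b 3 3 2 = 0"
  "sc b 3 3 3 = 0"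
  "sc b 3 3 4 = 0"
  "sc b 3 3 5 = 0"
  "sc b 3 3 6 = 0"
  "sc b 3 3 7 = 0"
  "sc b 3 3 8 = 0"
  "sc b 3 4 1 = 0"
  "sc b 3 4 2 = 0"
  "sc b 3 4 3 = 0"
  "sc b 3 4 4 = 0"
  "sc b 3 4 5 = 1"
  "sc b 3 4 6 = 0"
  "sc b 3 4 7 = 0"
  "sc b 3 4 8 = 0"
  "sc b 3 5 1 = 0"
  "sc b 3 5 2 = 0"
  "sc b 3 5 3 = 0"
  "sc b 3 5 4 = 0"
  "sc b 3 5 5 = 0"
  "sc b 3 5 6 = 0"
  "sc b 3 5 7 = 0"
  "sc b 3 5 8 = 0"
  "sc b 3 6 1 = 0"
  "sc b 3 6 2 = 0"
  "sc b 3 6 3 = 0"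
  "sc b 3 6 4 = 0"
  "sc b 3 6 5 = 0"
  "sc b 3 6 6 = 0"
  "sc b 3 6 7 = 1"
  "sc b 3 6 8 = 0"
  "sc b 3 7 1 = 0"
  "sc b 3 7 2 = 0"
  "sc b 3 7 3 = 0"
  "sc b 3 7 4 = 0"
  "sc b 3 7 5 = 0"
  "sc b 3 7 6 = 0"
  "sc b 3 7 7 = 0"
  "sc b 3 7 8 = 0"
  "sc b 3 8 1 = 0"
  "sc b 3 8 2 = 0"
  "sc b 3 8 3 = 0"
  "sc b 3 8 4 = 0"
  "sc b 3 8 5 = 0"
  "sc b 3 8 6 = 0"
  "sc b 3 8 7 = 0"
  "sc b 3 8 8 = 0"
  "sc b 4 1 1 = 0"
  "sc b 4 1 2 = 0"
  "sc b 4 1 3 = 0"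
  "sc b 4 1 4 = - 1"
  "sc b 4 1 5 = 0"
  "sc b 4 1 6 = 0"
  "sc b 4 1 7 = 0"
  "sc b 4 1 8 = 0"
  "sc b 4 2 1 = 0"
  "sc b 4 2 2 = 0"
  "sc b 4 2 3 = 0"
  "sc b 4 2 4 = 0"
  "sc b 4 2 5 = 0"
  "sc b 4 2 6 = 0"
  "sc b 4 2 7 = 0"
  "sc b 4 2 8 = 0"
  "sc b 4 3 1 = 0"
  "sc b 4 3 2 = 0"
  "sc b 4 3 3 = 0"
  "sc b 4 3 4 = 0"
  "sc b 4 3 5 = - 1"
  "sc b 4 3 6 = 0"
  "sc b 4 3 7 = 0"
  "sc b 4 3 8 = 0"
  "sc b 4 4 1 = 0"
  "sc b 4 4 2 = 0"
  "sc b 4 4 3 = 0"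
  "sc b 4 4 4 = 0"
  "sc b 4 4 5 = 0"
  "sc b 4 4 6 = 0"
  "sc b 4 4 7 = 0"
  "sc b 4 4 8 = 0"
  "sc b 4 5 1 = 0"
  "sc b 4 5 2 = 0"
  "sc b 4 5 3 = 0"
  "sc b 4 5 4 = 0"
  "sc b 4 5 5 = 0"
  "sc b 4 5 6 = 0"
  "sc b 4 5 7 = 0"
  "sc b 4 5 8 = 0"
  "sc b 4 6 1 = 0"
  "sc b 4 6 2 = 0"
  "sc b 4 6 3 = 0"
  "sc b 4 6 4 = 0"
  "sc b 4 6 5 = 0"
  "sc b 4 6 6 = 0"
  "sc b 4 6 7 = 0"
  "sc b 4 6 8 = 0"
  "sc b 4 7 1 = 0"
  "sc b 4 7 2 = 0"
  "sc b 4 7 3 = 0"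
  "sc b 4 7 4 = 0"
  "sc b 4 7 5 = 0"
  "sc b 4 7 6 = 0"
  "sc b 4 7 7 = 0"
  "sc b 4 7 8 = 0"
  "sc b 4 8 1 = 0"
  "sc b 4 8 2 = 0"
  "sc b 4 8 3 = 0"
  "sc b 4 8 4 = 1"
  "sc b 4 8 5 = 0"
  "sc b 4 8 6 = 0"
  "sc b 4 8 7 = 0"
  "sc b 4 8 8 = 0"
  "sc b 5 1 1 = 0"
  "sc b 5 1 2 = 0"
  "sc b 5 1 3 = 0"
  "sc b 5 1 4 = 0"
  "sc b 5 1 5 = 1"
  "sc b 5 1 6 = 0"
  "sc b 5 1 7 = 0"
  "sc b 5 1 8 = 0"
  "sc b 5 2 1 = 0"
  "sc b 5 2 2 = 0"
  "sc b 5 2 3 = 0"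
  "sc b 5 2 4 = - 1"
  "sc b 5 2 5 = 0"
  "sc b 5 2 6 = 0"
  "sc b 5 2 7 = 0"
  "sc b 5 2 8 = 0"
  "sc b 5 3 1 = 0"
  "sc b 5 3 2 = 0"
  "sc b 5 3 3 = 0"
  "sc b 5 3 4 = 0"
  "sc b 5 3 5 = 0"
  "sc b 5 3 6 = 0"
  "sc b 5 3 7 = 0"
  "sc b 5 3 8 = 0"
  "sc b 5 4 1 = 0"
  "sc b 5 4 2 = 0"
  "sc b 5 4 3 = 0"
  "sc b 5 4 4 = 0"
  "sc b 5 4 5 = 0"
  "sc b 5 4 6 = 0"
  "sc b 5 4 7 = 0"
  "sc b 5 4 8 = 0"
  "sc b 5 5 1 = 0"
  "sc b 5 5 2 = 0"
  "sc b 5 5 3 = 0"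
  "sc b 5 5 4 = 0"
  "sc b 5 5 5 = 0"
  "sc b 5 5 6 = 0"
  "sc b 5 5 7 = 0"
  "sc b 5 5 8 = 0"
  "sc b 5 6 1 = 0"
  "sc b 5 6 2 = 0"
  "sc b 5 6 3 = 0"
  "sc b 5 6 4 = 0"
  "sc b 5 6 5 = 0"
  "sc b 5 6 6 = 0"
  "sc b 5 6 7 = 0"
  "sc b 5 6 8 = 0"
  "sc b 5 7 1 = 0"
  "sc b 5 7 2 = 0"
  "sc b 5 7 3 = 0"
  "sc b 5 7 4 = 0"
  "sc b 5 7 5 = 0"
  "sc b 5 7 6 = 0"
  "sc b 5 7 7 = 0"
  "sc b 5 7 8 = 0"
  "sc b 5 8 1 = 0"
  "sc b 5 8 2 = 0"
  "sc b 5 8 3 = 0"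
  "sc b 5 8 4 = 0"
  "sc b 5 8 5 = 1"
  "sc b 5 8 6 = 0"
  "sc b 5 8 7 = 0"
  "sc b 5 8 8 = 0"
  "sc b 6 1 1 = 0"
  "sc b 6 1 2 = 0"
  "sc b 6 1 3 = 0"
  "sc b 6 1 4 = 0"
  "sc b 6 1 5 = 0"
  "sc b 6 1 6 = - 1"
  "sc b 6 1 7 = 0"
  "sc b 6 1 8 = 0"
  "sc b 6 2 1 = 0"
  "sc b 6 2 2 = 0"
  "sc b 6 2 3 = 0"
  "sc b 6 2 4 = 0"
  "sc b 6 2 5 = 0"
  "sc b 6 2 6 = 0"
  "sc b 6 2 7 = 0"
  "sc b 6 2 8 = 0"
  "sc b 6 3 1 = 0"
  "sc b 6 3 2 = 0"
  "sc b 6 3 3 = 0"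
  "sc b 6 3 4 = 0"
  "sc b 6 3 5 = 0"
  "sc b 6 3 6 = 0"
  "sc b 6 3 7 = - 1"
  "sc b 6 3 8 = 0"
  "sc b 6 4 1 = 0"
  "sc b 6 4 2 = 0"
  "sc b 6 4 3 = 0"
  "sc b 6 4 4 = 0"
  "sc b 6 4 5 = 0"
  "sc b 6 4 6 = 0"
  "sc b 6 4 7 = 0"
  "sc b 6 4 8 = 0"
  "sc b 6 5 1 = 0"
  "sc b 6 5 2 = 0"
  "sc b 6 5 3 = 0"
  "sc b 6 5 4 = 0"
  "sc b 6 5 5 = 0"
  "sc b 6 5 6 = 0"
  "sc b 6 5 7 = 0"
  "sc b 6 5 8 = 0"
  "sc b 6 6 1 = 0"
  "sc b 6 6 2 = 0"
  "sc b 6 6 3 = 0"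
  "sc b 6 6 4 = 0"
  "sc b 6 6 5 = 0"
  "sc b 6 6 6 = 0"
  "sc b 6 6 7 = 0"
  "sc b 6 6 8 = 0"
  "sc b 6 7 1 = 0"
  "sc b 6 7 2 = 0"
  "sc b 6 7 3 = 0"
  "sc b 6 7 4 = 0"
  "sc b 6 7 5 = 0"
  "sc b 6 7 6 = 0"
  "sc b 6 7 7 = 0"
  "sc b 6 7 8 = 0"
  "sc b 6 8 1 = 0"
  "sc b 6 8 2 = 0"
  "sc b 6 8 3 = 0"
  "sc b 6 8 4 = 0"
  "sc b 6 8 5 = 0"
  "sc b 6 8 6 = b"
  "sc b 6 8 7 = 0"
  "sc b 6 8 8 = 0"
  "sc b 7 1 1 = 0"
  "sc b 7 1 2 = 0"
  "sc b 7 1 3 = 0"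
  "sc b 7 1 4 = 0"
  "sc b 7 1 5 = 0"
  "sc b 7 1 6 = 0"
  "sc b 7 1 7 = 1"
  "sc b 7 1 8 = 0"
  "sc b 7 2 1 = 0"
  "sc b 7 2 2 = 0"
  "sc b 7 2 3 = 0"
  "sc b 7 2 4 = 0"
  "sc b 7 2 5 = 0"
  "sc b 7 2 6 = - 1"
  "sc b 7 2 7 = 0"
  "sc b 7 2 8 = 0"
  "sc b 7 3 1 = 0"
  "sc b 7 3 2 = 0"
  "sc b 7 3 3 = 0"
  "sc b 7 3 4 = 0"
  "sc b 7 3 5 = 0"
  "sc b 7 3 6 = 0"
  "sc b 7 3 7 = 0"
  "sc b 7 3 8 = 0"
  "sc b 7 4 1 = 0"
  "sc b 7 4 2 = 0"
  "sc b 7 4 3 = 0"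
  "sc b 7 4 4 = 0"
  "sc b 7 4 5 = 0"
  "sc b 7 4 6 = 0"
  "sc b 7 4 7 = 0"
  "sc b 7 4 8 = 0"
  "sc b 7 5 1 = 0"
  "sc b 7 5 2 = 0"
  "sc b 7 5 3 = 0"
  "sc b 7 5 4 = 0"
  "sc b 7 5 5 = 0"
  "sc b 7 5 6 = 0"
  "sc b 7 5 7 = 0"
  "sc b 7 5 8 = 0"
  "sc b 7 6 1 = 0"
  "sc b 7 6 2 = 0"
  "sc b 7 6 3 = 0"
  "sc b 7 6 4 = 0"
  "sc b 7 6 5 = 0"
  "sc b 7 6 6 = 0"
  "sc b 7 6 7 = 0"
  "sc b 7 6 8 = 0"
  "sc b 7 7 1 = 0"
  "sc b 7 7 2 = 0"
  "sc b 7 7 3 = 0"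
  "sc b 7 7 4 = 0"
  "sc b 7 7 5 = 0"
  "sc b 7 7 6 = 0"
  "sc b 7 7 7 = 0"
  "sc b 7 7 8 = 0"
  "sc b 7 8 1 = 0"
  "sc b 7 8 2 = 0"
  "sc b 7 8 3 = 0"
  "sc b 7 8 4 = 0"
  "sc b 7 8 5 = 0"
  "sc b 7 8 6 = 0"
  "sc b 7 8 7 = b"
  "sc b 7 8 8 = 0"
  "sc b 8 1 1 = 0"
  "sc b 8 1 2 = 0"
  "sc b 8 1 3 = 0"
  "sc b 8 1 4 = 0"
  "sc b 8 1 5 = 0"
  "sc b 8 1 6 = 0"
  "sc b 8 1 7 = 0"
  "sc b 8 1 8 = 0"
  "sc b 8 2 1 = 0"
  "sc b 8 2 2 = 0"
  "sc b 8 2 3 = 0"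
  "sc b 8 2 4 = 0"
  "sc b 8 2 5 = 0"
  "sc b 8 2 6 = 0"
  "sc b 8 2 7 = 0"
  "sc b 8 2 8 = 0"
  "sc b 8 3 1 = 0"
  "sc b 8 3 2 = 0"
  "sc b 8 3 3 = 0"
  "sc b 8 3 4 = 0"
  "sc b 8 3 5 = 0"
  "sc b 8 3 6 = 0"
  "sc b 8 3 7 = 0"
  "sc b 8 3 8 = 0"
  "sc b 8 4 1 = 0"
  "sc b 8 4 2 = 0"
  "sc b 8 4 3 = 0"
  "sc b 8 4 4 = - 1"
  "sc b 8 4 5 = 0"
  "sc b 8 4 6 = 0"
  "sc b 8 4 7 = 0"
  "sc b 8 4 8 = 0"
  "sc b 8 5 1 = 0"
  "sc b 8 5 2 = 0"
  "sc b 8 5 3 = 0"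
  "sc b 8 5 4 = 0"
  "sc b 8 5 5 = - 1"
  "sc b 8 5 6 = 0"
  "sc b 8 5 7 = 0"
  "sc b 8 5 8 = 0"
  "sc b 8 6 1 = 0"
  "sc b 8 6 2 = 0"
  "sc b 8 6 3 = 0"
  "sc b 8 6 4 = 0"
  "sc b 8 6 5 = 0"
  "sc b 8 6 6 = - b"
  "sc b 8 6 7 = 0"
  "sc b 8 6 8 = 0"
  "sc b 8 7 1 = 0"
  "sc b 8 7 2 = 0"
  "sc b 8 7 3 = 0"
  "sc b 8 7 4 = 0"
  "sc b 8 7 5 = 0"
  "sc b 8 7 6 = 0"
  "sc b 8 7 7 = - b"
  "sc b 8 7 8 = 0"
  "sc b 8 8 1 = 0"
  "sc b 8 8 2 = 0"
  "sc b 8 8 3 = 0"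
  "sc b 8 8 4 = 0"
  "sc b 8 8 5 = 0"
  "sc b 8 8 6 = 0"
  "sc b 8 8 7 = 0"
  "sc b 8 8 8 = 0"
  by (simp_all add: sc_def sc_upper_def)
definition jt :: "real \<Rightarrow> nat \<Rightarrow> nat \<Rightarrow> nat \<Rightarrow> nat \<Rightarrow> real" where
  "jt b i j k m = (\<Sum>l\<in>idx. sc b i j l * sc b l k m + sc b j k l * sc b l i m + sc b k i l * sc b l j m)"

lemma idx_cases: "(i::nat) \<in> idx \<Longrightarrow> i = 1 \<or> i = 2 \<or> i = 3 \<or> i = 4 \<or> i = 5 \<or> i = 6 \<or> i = 7 \<or> i = 8"
  by auto

lemma jt_1_1: "\<forall>k\<in>idx. \<forall>m\<in>idx. jt b 1 1 k m = 0"
  unfolding ball8 jt_def sum8 sc_tab by simp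

lemma jt_1_2: "\<forall>k\<in>idx. \<forall>m\<in>idx. jt b 1 2 k m = 0"
  unfolding ball8 jt_def sum8 sc_tab by simp

lemma jt_1_3: "\<forall>k\<in>idx. \<forall>m\<in>idx. jt b 1 3 k m = 0"
  unfolding ball8 jt_def sum8 sc_tab by simp

lemma jt_1_4: "\<forall>k\<in>idx. \<forall>m\<in>idx. jt b 1 4 k m = 0"
  unfolding ball8 jt_def sum8 sc_tab by simp

lemma jt_1_5: "\<forall>k\<in>idx. \<forall>m\<in>idx. jt b 1 5 k m = 0"
  unfolding ball8 jt_def sum8 sc_tab by simp

lemma jt_1_6: "\<forall>k\<in>idx. \<forall>m\<in>idx. jt b 1 6 k m = 0"
  unfolding ball8 jt_def sum8 sc_tab by simp

lemma jt_1_7: "\<forall>k\<in>idx. \<forall>m\<in>idx. jt b 1 7 k m = 0"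
  unfolding ball8 jt_def sum8 sc_tab by simp

lemma jt_1_8: "\<forall>k\<in>idx. \<forall>m\<in>idx. jt b 1 8 k m = 0"
  unfolding ball8 jt_def sum8 sc_tab by simp

lemma jt_1: "j \<in> idx \<Longrightarrow> \<forall>k\<in>idx. \<forall>m\<in>idx. jt b 1 j k m = 0"
  by (drule idx_cases) (elim disjE; metis jt_1_1 jt_1_2 jt_1_3 jt_1_4 jt_1_5 jt_1_6 jt_1_7 jt_1_8)

lemma jt_2_1: "\<forall>k\<in>idx. \<forall>m\<in>idx. jt b 2 1 k m = 0"
  unfolding ball8 jt_def sum8 sc_tab by simp

lemma jt_2_2: "\<forall>k\<in>idx. \<forall>m\<in>idx. jt b 2 2 k m = 0"
  unfolding ball8 jt_def sum8 sc_tab by simp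

lemma jt_2_3: "\<forall>k\<in>idx. \<forall>m\<in>idx. jt b 2 3 k m = 0"
  unfolding ball8 jt_def sum8 sc_tab by simp

lemma jt_2_4: "\<forall>k\<in>idx. \<forall>m\<in>idx. jt b 2 4 k m = 0"
  unfolding ball8 jt_def sum8 sc_tab by simp

lemma jt_2_5: "\<forall>k\<in>idx. \<forall>m\<in>idx. jt b 2 5 k m = 0"
  unfolding ball8 jt_def sum8 sc_tab by simp

lemma jt_2_6: "\<forall>k\<in>idx. \<forall>m\<in>idx. jt b 2 6 k m = 0"
  unfolding ball8 jt_def sum8 sc_tab by simp

lemma jt_2_7: "\<forall>k\<in>idx. \<forall>m\<in>idx. jt b 2 7 k m = 0"
  unfolding ball8 jt_def sum8 sc_tab by simp

lemma jt_2_8: "\<forall>k\<in>idx. \<forall>m\<in>idx. jt b 2 8 k m = 0"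
  unfolding ball8 jt_def sum8 sc_tab by simp

lemma jt_2: "j \<in> idx \<Longrightarrow> \<forall>k\<in>idx. \<forall>m\<in>idx. jt b 2 j k m = 0"
  by (drule idx_cases) (elim disjE; metis jt_2_1 jt_2_2 jt_2_3 jt_2_4 jt_2_5 jt_2_6 jt_2_7 jt_2_8)

lemma jt_3_1: "\<forall>k\<in>idx. \<forall>m\<in>idx. jt b 3 1 k m = 0"
  unfolding ball8 jt_def sum8 sc_tab by simp

lemma jt_3_2: "\<forall>k\<in>idx. \<forall>m\<in>idx. jt b 3 2 k m = 0"
  unfolding ball8 jt_def sum8 sc_tab by simp

lemma jt_3_3: "\<forall>k\<in>idx. \<forall>m\<in>idx. jt b 3 3 k m = 0"
  unfolding ball8 jt_def sum8 sc_tab by simp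

lemma jt_3_4: "\<forall>k\<in>idx. \<forall>m\<in>idx. jt b 3 4 k m = 0"
  unfolding ball8 jt_def sum8 sc_tab by simp

lemma jt_3_5: "\<forall>k\<in>idx. \<forall>m\<in>idx. jt b 3 5 k m = 0"
  unfolding ball8 jt_def sum8 sc_tab by simp

lemma jt_3_6: "\<forall>k\<in>idx. \<forall>m\<in>idx. jt b 3 6 k m = 0"
  unfolding ball8 jt_def sum8 sc_tab by simp

lemma jt_3_7: "\<forall>k\<in>idx. \<forall>m\<in>idx. jt b 3 7 k m = 0"
  unfolding ball8 jt_def sum8 sc_tab by simp

lemma jt_3_8: "\<forall>k\<in>idx. \<forall>m\<in>idx. jt b 3 8 k m = 0"
  unfolding ball8 jt_def sum8 sc_tab by simp

lemma jt_3: "j \<in> idx \<Longrightarrow> \<forall>k\<in>idx. \<forall>m\<in>idx. jt b 3 j k m = 0"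
  by (drule idx_cases) (elim disjE; metis jt_3_1 jt_3_2 jt_3_3 jt_3_4 jt_3_5 jt_3_6 jt_3_7 jt_3_8)

lemma jt_4_1: "\<forall>k\<in>idx. \<forall>m\<in>idx. jt b 4 1 k m = 0"
  unfolding ball8 jt_def sum8 sc_tab by simp

lemma jt_4_2: "\<forall>k\<in>idx. \<forall>m\<in>idx. jt b 4 2 k m = 0"
  unfolding ball8 jt_def sum8 sc_tab by simp

lemma jt_4_3: "\<forall>k\<in>idx. \<forall>m\<in>idx. jt b 4 3 k m = 0"
  unfolding ball8 jt_def sum8 sc_tab by simp

lemma jt_4_4: "\<forall>k\<in>idx. \<forall>m\<in>idx. jt b 4 4 k m = 0"
  unfolding ball8 jt_def sum8 sc_tab by simp

lemma jt_4_5: "\<forall>k\<in>idx. \<forall>m\<in>idx. jt b 4 5 k m = 0"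
  unfolding ball8 jt_def sum8 sc_tab by simp

lemma jt_4_6: "\<forall>k\<in>idx. \<forall>m\<in>idx. jt b 4 6 k m = 0"
  unfolding ball8 jt_def sum8 sc_tab by simp

lemma jt_4_7: "\<forall>k\<in>idx. \<forall>m\<in>idx. jt b 4 7 k m = 0"
  unfolding ball8 jt_def sum8 sc_tab by simp

lemma jt_4_8: "\<forall>k\<in>idx. \<forall>m\<in>idx. jt b 4 8 k m = 0"
  unfolding ball8 jt_def sum8 sc_tab by simp

lemma jt_4: "j \<in> idx \<Longrightarrow> \<forall>k\<in>idx. \<forall>m\<in>idx. jt b 4 j k m = 0"
  by (drule idx_cases) (elim disjE; metis jt_4_1 jt_4_2 jt_4_3 jt_4_4 jt_4_5 jt_4_6 jt_4_7 jt_4_8)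

lemma jt_5_1: "\<forall>k\<in>idx. \<forall>m\<in>idx. jt b 5 1 k m = 0"
  unfolding ball8 jt_def sum8 sc_tab by simp

lemma jt_5_2: "\<forall>k\<in>idx. \<forall>m\<in>idx. jt b 5 2 k m = 0"
  unfolding ball8 jt_def sum8 sc_tab by simp

lemma jt_5_3: "\<forall>k\<in>idx. \<forall>m\<in>idx. jt b 5 3 k m = 0"
  unfolding ball8 jt_def sum8 sc_tab by simp

lemma jt_5_4: "\<forall>k\<in>idx. \<forall>m\<in>idx. jt b 5 4 k m = 0"
  unfolding ball8 jt_def sum8 sc_tab by simp

lemma jt_5_5: "\<forall>k\<in>idx. \<forall>m\<in>idx. jt b 5 5 k m = 0"
  unfolding ball8 jt_def sum8 sc_tab by simp

lemma jt_5_6: "\<forall>k\<in>idx. \<forall>m\<in>idx. jt b 5 6 k m = 0"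
  unfolding ball8 jt_def sum8 sc_tab by simp

lemma jt_5_7: "\<forall>k\<in>idx. \<forall>m\<in>idx. jt b 5 7 k m = 0"
  unfolding ball8 jt_def sum8 sc_tab by simp

lemma jt_5_8: "\<forall>k\<in>idx. \<forall>m\<in>idx. jt b 5 8 k m = 0"
  unfolding ball8 jt_def sum8 sc_tab by simp

lemma jt_5: "j \<in> idx \<Longrightarrow> \<forall>k\<in>idx. \<forall>m\<in>idx. jt b 5 j k m = 0"
  by (drule idx_cases) (elim disjE; metis jt_5_1 jt_5_2 jt_5_3 jt_5_4 jt_5_5 jt_5_6 jt_5_7 jt_5_8)

lemma jt_6_1: "\<forall>k\<in>idx. \<forall>m\<in>idx. jt b 6 1 k m = 0"
  unfolding ball8 jt_def sum8 sc_tab by simp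

lemma jt_6_2: "\<forall>k\<in>idx. \<forall>m\<in>idx. jt b 6 2 k m = 0"
  unfolding ball8 jt_def sum8 sc_tab by simp

lemma jt_6_3: "\<forall>k\<in>idx. \<forall>m\<in>idx. jt b 6 3 k m = 0"
  unfolding ball8 jt_def sum8 sc_tab by simp

lemma jt_6_4: "\<forall>k\<in>idx. \<forall>m\<in>idx. jt b 6 4 k m = 0"
  unfolding ball8 jt_def sum8 sc_tab by simp

lemma jt_6_5: "\<forall>k\<in>idx. \<forall>m\<in>idx. jt b 6 5 k m = 0"
  unfolding ball8 jt_def sum8 sc_tab by simp

lemma jt_6_6: "\<forall>k\<in>idx. \<forall>m\<in>idx. jt b 6 6 k m = 0"
  unfolding ball8 jt_def sum8 sc_tab by simp

lemma jt_6_7: "\<forall>k\<in>idx. \<forall>m\<in>idx. jt b 6 7 k m = 0"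
  unfolding ball8 jt_def sum8 sc_tab by simp

lemma jt_6_8: "\<forall>k\<in>idx. \<forall>m\<in>idx. jt b 6 8 k m = 0"
  unfolding ball8 jt_def sum8 sc_tab by simp

lemma jt_6: "j \<in> idx \<Longrightarrow> \<forall>k\<in>idx. \<forall>m\<in>idx. jt b 6 j k m = 0"
  by (drule idx_cases) (elim disjE; metis jt_6_1 jt_6_2 jt_6_3 jt_6_4 jt_6_5 jt_6_6 jt_6_7 jt_6_8)

lemma jt_7_1: "\<forall>k\<in>idx. \<forall>m\<in>idx. jt b 7 1 k m = 0"
  unfolding ball8 jt_def sum8 sc_tab by simp

lemma jt_7_2: "\<forall>k\<in>idx. \<forall>m\<in>idx. jt b 7 2 k m = 0"
  unfolding ball8 jt_def sum8 sc_tab by simp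

lemma jt_7_3: "\<forall>k\<in>idx. \<forall>m\<in>idx. jt b 7 3 k m = 0"
  unfolding ball8 jt_def sum8 sc_tab by simp

lemma jt_7_4: "\<forall>k\<in>idx. \<forall>m\<in>idx. jt b 7 4 k m = 0"
  unfolding ball8 jt_def sum8 sc_tab by simp

lemma jt_7_5: "\<forall>k\<in>idx. \<forall>m\<in>idx. jt b 7 5 k m = 0"
  unfolding ball8 jt_def sum8 sc_tab by simp

lemma jt_7_6: "\<forall>k\<in>idx. \<forall>m\<in>idx. jt b 7 6 k m = 0"
  unfolding ball8 jt_def sum8 sc_tab by simp

lemma jt_7_7: "\<forall>k\<in>idx. \<forall>m\<in>idx. jt b 7 7 k m = 0"
  unfolding ball8 jt_def sum8 sc_tab by simp

lemma jt_7_8: "\<forall>k\<in>idx. \<forall>m\<in>idx. jt b 7 8 k m = 0"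
  unfolding ball8 jt_def sum8 sc_tab by simp

lemma jt_7: "j \<in> idx \<Longrightarrow> \<forall>k\<in>idx. \<forall>m\<in>idx. jt b 7 j k m = 0"
  by (drule idx_cases) (elim disjE; metis jt_7_1 jt_7_2 jt_7_3 jt_7_4 jt_7_5 jt_7_6 jt_7_7 jt_7_8)

lemma jt_8_1: "\<forall>k\<in>idx. \<forall>m\<in>idx. jt b 8 1 k m = 0"
  unfolding ball8 jt_def sum8 sc_tab by simp

lemma jt_8_2: "\<forall>k\<in>idx. \<forall>m\<in>idx. jt b 8 2 k m = 0"
  unfolding ball8 jt_def sum8 sc_tab by simp

lemma jt_8_3: "\<forall>k\<in>idx. \<forall>m\<in>idx. jt b 8 3 k m = 0"
  unfolding ball8 jt_def sum8 sc_tab by simp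

lemma jt_8_4: "\<forall>k\<in>idx. \<forall>m\<in>idx. jt b 8 4 k m = 0"
  unfolding ball8 jt_def sum8 sc_tab by simp

lemma jt_8_5: "\<forall>k\<in>idx. \<forall>m\<in>idx. jt b 8 5 k m = 0"
  unfolding ball8 jt_def sum8 sc_tab by simp

lemma jt_8_6: "\<forall>k\<in>idx. \<forall>m\<in>idx. jt b 8 6 k m = 0"
  unfolding ball8 jt_def sum8 sc_tab by simp

lemma jt_8_7: "\<forall>k\<in>idx. \<forall>m\<in>idx. jt b 8 7 k m = 0"
  unfolding ball8 jt_def sum8 sc_tab by simp

lemma jt_8_8: "\<forall>k\<in>idx. \<forall>m\<in>idx. jt b 8 8 k m = 0"
  unfolding ball8 jt_def sum8 sc_tab by simp

lemma jt_8: "j \<in> idx \<Longrightarrow> \<forall>k\<in>idx. \<forall>m\<in>idx. jt b 8 j k m = 0"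
  by (drule idx_cases) (elim disjE; metis jt_8_1 jt_8_2 jt_8_3 jt_8_4 jt_8_5 jt_8_6 jt_8_7 jt_8_8)

lemma jt_all: "i \<in> idx \<Longrightarrow> j \<in> idx \<Longrightarrow> \<forall>k\<in>idx. \<forall>m\<in>idx. jt b i j k m = 0"
  by (drule idx_cases) (elim disjE; metis jt_1 jt_2 jt_3 jt_4 jt_5 jt_6 jt_7 jt_8)

lemma jacobi_sc: "jacobi8 (sc b)"
proof (unfold jacobi8_def, intro ballI)
  fix i j k m assume h: "i \<in> idx" "j \<in> idx" "k \<in> idx" "m \<in> idx"
  have "jt b i j k m = 0" using jt_all[OF h(1,2)] h(3,4) by blast
  then show "(\<Sum>l\<in>idx. sc b i j l * sc b l k m + sc b j k l * sc b l i m + sc b k i l * sc b l j m) = 0"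
    by (simp only: jt_def)
qed
lemma lie8_cong:
  assumes "\<And>i j k. i \<in> idx \<Longrightarrow> j \<in> idx \<Longrightarrow> k \<in> idx \<Longrightarrow> D i j k = D' i j k"
  shows "lie8 D \<longleftrightarrow> lie8 D'"
proof -
  have s: "skew8 D \<longleftrightarrow> skew8 D'" unfolding skew8_def using assms by auto
  have j: "jacobi8 D \<longleftrightarrow> jacobi8 D'" unfolding jacobi8_def
    apply (intro ball_cong refl)
    apply (rule arg_cong[where f="\<lambda>x. x = 0"])
    apply (rule sum.cong[OF refl])
    using assms by auto
  show ?thesis unfolding lie8_def using s j by simp
qed

lemma skew_sc: "skew8 (sc b)"
  unfolding skew8_def sc_def by auto

lemma sc_lin: "\<forall>i\<in>idx. \<forall>j\<in>idx. \<forall>k\<in>idx. sc a i j k + t * (sc 1 i j k - sc 0 i j k) = sc (a + t) i j k"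
  unfolding ball8 sc_tab by simp

lemma skew_phi: "skew8 (\<lambda>i j k. sc 1 i j k - sc 0 i j k)"
  unfolding skew8_def ball8 sc_tab by simp

lemma lie_sc: "lie8 (sc b)"
  using skew_sc jacobi_sc by (simp add: lie8_def)

lemma deform: "linear_deformation8 (sc (-1)) (sc a)"
  unfolding linear_deformation8_def
proof (intro exI conjI allI)
  show "skew8 (\<lambda>i j k. sc 1 i j k - sc 0 i j k)" by (rule skew_phi)
  fix t :: real
  have "lie8 (\<lambda>i j k. sc a i j k + t * (sc 1 i j k - sc 0 i j k)) \<longleftrightarrow> lie8 (sc (a + t))"
    by (rule lie8_cong) (use sc_lin in blast)
  then show "lie8 (\<lambda>i j k. sc a i j k + t * (sc 1 i j k - sc 0 i j k))"
    using lie_sc by simp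
next
  show "\<forall>i\<in>idx. \<forall>j\<in>idx. \<forall>k\<in>idx. sc (-1) i j k = sc a i j k + (-1 - a) * (sc 1 i j k - sc 0 i j k)"
    using sc_lin[of a "-1 - a"] by simp
qed

definition x0 :: "nat \<Rightarrow> real" where "x0 k = (if k = 4 \<or> k = 7 then 1 else 0)"

lemma full_rank_a: assumes "a \<noteq> -1" shows "vec_space.rank 8 (coadj_mat (sc a) x0) = 8"
proof (rule rank_full[OF coadj_carrier])
  fix v :: "real vec" assume v: "v \<in> carrier_vec 8" and z: "coadj_mat (sc a) x0 *\<^sub>v v = 0\<^sub>v 8"
  note e = mulvec_eq[OF coadj_carrier v z]
  have e0: "v$3 - v$6 = 0" using e[of 0] by (simp add: coadj_ent sum8 sc_tab x0_def del: One_nat_def)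
  have e1: "v$4 = 0" using e[of 1] by (simp add: coadj_ent sum8 sc_tab x0_def del: One_nat_def)
  have e2: "v$5 = 0" using e[of 2] by (simp add: coadj_ent sum8 sc_tab x0_def del: One_nat_def)
  have e3: "v$7 - v$0 = 0" using e[of 3] by (simp add: coadj_ent sum8 sc_tab x0_def del: One_nat_def)
  have e4: "v$1 = 0" using e[of 4] by (simp add: coadj_ent sum8 sc_tab x0_def del: One_nat_def)
  have e5: "v$2 = 0" using e[of 5] by (simp add: coadj_ent sum8 sc_tab x0_def del: One_nat_def)
  have e6: "v$0 + a * v$7 = 0" using e[of 6] by (simp add: coadj_ent sum8 sc_tab x0_def del: One_nat_def)
  have e7: "v$3 + a * v$6 = 0" using e[of 7] by (simp add: coadj_ent sum8 sc_tab x0_def del: One_nat_def)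
  have na: "1 + a \<noteq> 0" using assms by simp
  have "(1 + a) * v$7 = 0" using e3 e6 by (simp add: algebra_simps)
  then have z7: "v$7 = 0" using na by simp
  have "(1 + a) * v$6 = 0" using e0 e7 by (simp add: algebra_simps)
  then have z6: "v$6 = 0" using na by simp
  have z0: "v$0 = 0" using e3 z7 by simp
  have z3: "v$3 = 0" using e0 z6 by simp
  show "v = 0\<^sub>v 8"
  proof (rule eq_vecI)
    show "dim_vec v = dim_vec (0\<^sub>v 8)" using v by simp
    fix i assume "i < dim_vec (0\<^sub>v 8)"
    then have "i < 8" by simp
    then show "v $ i = 0\<^sub>v 8 $ i" using z0 e4 e5 z3 e1 e2 z6 z7 by (auto dest!: less8)
  qed
qed

lemma rank_c4: fixes x :: "nat \<Rightarrow> real" assumes ha: "x 5 \<noteq> 0" and hb: "x 7 \<noteq> 0"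
  shows "vec_space.rank 8 (coadj_mat (sc (-1)) x) \<le> 6"
  apply (rule rank_le_wedges[where ua = "(\<lambda>r. [1, -(x 6 / x 7), 0, 0, 0, 0, 0, -1] ! r)" and wa = "(\<lambda>r. [0, x 2, -x 3, x 4, 0, 0, -x 7, 0] ! r)" and ub = "(\<lambda>r. [1, -(x 4 / x 5), 0, 0, 0, 0, 0, 1] ! r)" and wb = "(\<lambda>r. [0, x 2, -x 3, 0, -x 5, x 6, 0, 0] ! r)" and uc = "(\<lambda>r. [0, x 4 * x 6 / (x 5 * x 7), 1, 0, 0, 0, 0, 0] ! r)" and wc = "(\<lambda>r. [0, -(x 1 - x 3 * (x 6 / x 7 + x 4 / x 5)), 0, x 5, 0, x 7, 0, 0] ! r)", OF coadj_carrier])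
  subgoal premises p for r c
    using less8[OF p(1)] less8[OF p(2)] ha hb
    by (elim disjE) (simp_all add: coadj_ent sum8 sc_tab field_simps del: One_nat_def)
  done

lemma rank_c3: fixes x :: "nat \<Rightarrow> real" assumes ha: "x 4 \<noteq> 0" and hb: "x 6 \<noteq> 0"
  shows "vec_space.rank 8 (coadj_mat (sc (-1)) x) \<le> 6"
  apply (rule rank_le_wedges[where ua = "(\<lambda>r. [1, 0, x 5 / x 4, 0, 0, 0, 0, -1] ! r)" and wa = "(\<lambda>r. [0, x 2, -x 3, x 4, 0, 0, -x 7, 0] ! r)" and ub = "(\<lambda>r. [1, 0, x 7 / x 6, 0, 0, 0, 0, 1] ! r)" and wb = "(\<lambda>r. [0, x 2, -x 3, 0, -x 5, x 6, 0, 0] ! r)" and uc = "(\<lambda>r. [0, 1, x 5 * x 7 / (x 4 * x 6), 0, 0, 0, 0, 0] ! r)" and wc = "(\<lambda>r. [0, 0, (x 1 + x 2 * (x 5 / x 4 + x 7 / x 6)), 0, x 4, 0, x 6, 0] ! r)", OF coadj_carrier])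
  subgoal premises p for r c
    using less8[OF p(1)] less8[OF p(2)] ha hb
    by (elim disjE) (simp_all add: coadj_ent sum8 sc_tab field_simps del: One_nat_def)
  done

lemma rank_c1: fixes x :: "nat \<Rightarrow> real" assumes ha: "x 5 \<noteq> 0" and hb: "x 6 \<noteq> 0"
  shows "vec_space.rank 8 (coadj_mat (sc (-1)) x) \<le> 6"
  apply (rule rank_le_wedges[where ua = "(\<lambda>r. [1 - (x 4 * x 7 / (x 5 * x 6)), 0, 0, 0, 0, 0, 0, 1 + (x 4 * x 7 / (x 5 * x 6))] ! r)" and wa = "(\<lambda>r. [0, x 2, -x 3, 0, -x 5, x 6, 0, 0] ! r)" and ub = "(\<lambda>r. [(x 4 / x 5), 0, 1, 0, 0, 0, 0, -(x 4 / x 5)] ! r)" and wb = "(\<lambda>r. [(x 3 * (1 + (x 4 * x 7 / (x 5 * x 6)))), -x 1, 0, x 5, 0, x 7, 0, -(x 3 * (1 + (x 4 * x 7 / (x 5 * x 6))))] ! r)" and uc = "(\<lambda>r. [-(x 7 / x 6), 1, 0, 0, 0, 0, 0, (x 7 / x 6)] ! r)" and wc = "(\<lambda>r. [-(x 2 * (1 + (x 4 * x 7 / (x 5 * x 6))) + x 1 * (x 4 / x 5)), 0, 0, 0, x 4, 0, x 6, (x 2 * (1 + (x 4 * x 7 / (x 5 * x 6))) + x 1 * (x 4 / x 5))] ! r)", OF coadj_carrier])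
  subgoal premises p for r c
    using less8[OF p(1)] less8[OF p(2)] ha hb
    by (elim disjE) (simp_all add: coadj_ent sum8 sc_tab field_simps del: One_nat_def)
  done

lemma rank_c2: fixes x :: "nat \<Rightarrow> real" assumes ha: "x 4 \<noteq> 0" and hb: "x 7 \<noteq> 0"
  shows "vec_space.rank 8 (coadj_mat (sc (-1)) x) \<le> 6"
  apply (rule rank_le_wedges[where ua = "(\<lambda>r. [1 - (x 5 * x 6 / (x 4 * x 7)), 0, 0, 0, 0, 0, 0, -1 - (x 5 * x 6 / (x 4 * x 7))] ! r)" and wa = "(\<lambda>r. [0, x 2, -x 3, x 4, 0, 0, -x 7, 0] ! r)" and ub = "(\<lambda>r. [(x 6 / x 7), 0, 1, 0, 0, 0, 0, (x 6 / x 7)] ! r)" and wb = "(\<lambda>r. [(x 3 * (1 + (x 5 * x 6 / (x 4 * x 7)))), -x 1, 0, x 5, 0, x 7, 0, (x 3 * (1 + (x 5 * x 6 / (x 4 * x 7))))] ! r)" and uc = "(\<lambda>r. [-(x 5 / x 4), 1, 0, 0, 0, 0, 0, -(x 5 / x 4)] ! r)" and wc = "(\<lambda>r. [-(x 2 * (1 + (x 5 * x 6 / (x 4 * x 7))) + x 1 * (x 6 / x 7)), 0, 0, 0, x 4, 0, x 6, -(x 2 * (1 + (x 5 * x 6 / (x 4 * x 7))) + x 1 * (x 6 / x 7))] ! r)", OF coadj_carrier])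
  subgoal premises p for r c
    using less8[OF p(1)] less8[OF p(2)] ha hb
    by (elim disjE) (simp_all add: coadj_ent sum8 sc_tab field_simps del: One_nat_def)
  done
lemma rank_le_cols:
  fixes A :: "real mat"
  assumes A: "A \<in> carrier_mat n n" and z: "\<And>r c. r < n \<Longrightarrow> c < n \<Longrightarrow> c \<notin> set js \<Longrightarrow> A $$ (r,c) = 0"
    and d: "distinct js"
  shows "vec_space.rank n A \<le> length js"
proof (rule rank_le_sum[OF A, where f = "\<lambda>k r. A $$ (r, js ! k)" and g = "\<lambda>k c. if c = js ! k then 1 else 0"])
  fix r c assume rc: "r < n" "c < n"
  show "A $$ (r,c) = (\<Sum>k<length js. A $$ (r, js ! k) * (if c = js ! k then 1 else 0))"
  proof (cases "c \<in> set js")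
    case True
    then obtain i where i: "i < length js" "js ! i = c" by (auto simp: in_set_conv_nth)
    have "(\<Sum>k<length js. A $$ (r, js ! k) * (if c = js ! k then 1 else 0))
        = (\<Sum>k<length js. if k = i then A $$ (r, c) else 0)"
    proof (rule sum.cong[OF refl])
      fix k assume "k \<in> {..<length js}"
      then have "c = js ! k \<longleftrightarrow> k = i" using i d by (auto simp: nth_eq_iff_index_eq)
      then show "A $$ (r, js ! k) * (if c = js ! k then 1 else 0) = (if k = i then A $$ (r, c) else 0)"
        using i by auto
    qed
    also have "\<dots> = A $$ (r,c)" using i by simp
    finally show ?thesis by simp
  next
    case False
    then have "\<And>k. k < length js \<Longrightarrow> c \<noteq> js ! k" by auto
    then show ?thesis using z[OF rc False] by simp
  qed
qed

lemma rank_p0: fixes x :: "nat \<Rightarrow> real" assumes "x 4 = 0" "x 5 = 0"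
  shows "vec_space.rank 8 (coadj_mat (sc (-1)) x) \<le> 6"
proof -
  have "vec_space.rank 8 (coadj_mat (sc (-1)) x) \<le> length [0,1,2,5,6,7::nat]"
  proof (rule rank_le_cols[OF coadj_carrier])
    fix r c :: nat assume "r < 8" "c < 8" "c \<notin> set [0,1,2,5,6,7]"
    then have "c = 3 \<or> c = 4" by (auto dest!: less8)
    then show "coadj_mat (sc (-1)) x $$ (r, c) = 0" using less8[OF \<open>r < 8\<close>] assms
      by (elim disjE) (simp_all add: coadj_ent sum8 sc_tab del: One_nat_def)
  qed simp
  then show ?thesis by simp
qed

lemma rank_q0: fixes x :: "nat \<Rightarrow> real" assumes "x 6 = 0" "x 7 = 0"
  shows "vec_space.rank 8 (coadj_mat (sc (-1)) x) \<le> 6"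
proof -
  have "vec_space.rank 8 (coadj_mat (sc (-1)) x) \<le> length [0,1,2,3,4,7::nat]"
  proof (rule rank_le_cols[OF coadj_carrier])
    fix r c :: nat assume "r < 8" "c < 8" "c \<notin> set [0,1,2,3,4,7]"
    then have "c = 5 \<or> c = 6" by (auto dest!: less8)
    then show "coadj_mat (sc (-1)) x $$ (r, c) = 0" using less8[OF \<open>r < 8\<close>] assms
      by (elim disjE) (simp_all add: coadj_ent sum8 sc_tab del: One_nat_def)
  qed simp
  then show ?thesis by simp
qed

lemma rank_m1_le: "vec_space.rank 8 (coadj_mat (sc (-1)) x) \<le> 6"
proof (cases "x 4 = 0 \<and> x 5 = 0")
  case True then show ?thesis using rank_p0 by blast
next
  case F1: False
  show ?thesis
  proof (cases "x 6 = 0 \<and> x 7 = 0")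
    case True then show ?thesis using rank_q0 by blast
  next
    case False
    then show ?thesis using F1 rank_c1 rank_c2 rank_c3 rank_c4 by blast
  qed
qed

definition Nfix :: "real mat" where
  "Nfix = mat 8 8 (\<lambda>(r,c). if (r = 0 \<and> c = 0) \<or> (r = 3 \<and> c = 3) then 1 else 0)"

lemma rank_Nfix: "vec_space.rank 8 Nfix \<le> 2"
proof (rule rank_le_sum[where f = "\<lambda>k r. if r = [0,3] ! k then 1 else 0" and g = "\<lambda>k c. if c = [0,3] ! k then 1 else 0"])
  show "Nfix \<in> carrier_mat 8 8" by (simp add: Nfix_def)
  fix r c :: nat assume "r < 8" "c < 8"
  then show "Nfix $$ (r, c) = (\<Sum>k<2. (if r = [0,3] ! k then 1 else 0) * (if c = [0,3] ! k then 1 else 0))"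
    by (auto simp: Nfix_def numeral_eq_Suc)
qed

lemma rank_m1_ge: "6 \<le> vec_space.rank 8 (coadj_mat (sc (-1)) x0)"
proof -
  let ?A = "coadj_mat (sc (-1)) x0"
  have AN: "?A + Nfix \<in> carrier_mat 8 8" by (simp add: coadj_mat_def Nfix_def)
  have ent: "(?A + Nfix) $$ (r, c) = ?A $$ (r,c) + Nfix $$ (r,c)" if "r < 8" "c < 8" for r c
    using that by (simp add: coadj_mat_def Nfix_def)
  have "vec_space.rank 8 (?A + Nfix) = 8"
  proof (rule rank_full[OF AN])
    fix v :: "real vec" assume v: "v \<in> carrier_vec 8" and z: "(?A + Nfix) *\<^sub>v v = 0\<^sub>v 8"
    note e = mulvec_eq[OF AN v z, unfolded ent]
    have e0: "v$3 - v$6 + v$0 = 0" using e[of 0] by (simp add: ent coadj_ent sum8 sc_tab x0_def Nfix_def del: One_nat_def)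
    have e1: "v$4 = 0" using e[of 1] by (simp add: ent coadj_ent sum8 sc_tab x0_def Nfix_def del: One_nat_def)
    have e2: "v$5 = 0" using e[of 2] by (simp add: ent coadj_ent sum8 sc_tab x0_def Nfix_def del: One_nat_def)
    have e3: "v$7 - v$0 + v$3 = 0" using e[of 3] by (simp add: ent coadj_ent sum8 sc_tab x0_def Nfix_def del: One_nat_def)
    have e4: "v$1 = 0" using e[of 4] by (simp add: ent coadj_ent sum8 sc_tab x0_def Nfix_def del: One_nat_def)
    have e5: "v$2 = 0" using e[of 5] by (simp add: ent coadj_ent sum8 sc_tab x0_def Nfix_def del: One_nat_def)
    have e6: "v$0 - v$7 = 0" using e[of 6] by (simp add: ent coadj_ent sum8 sc_tab x0_def Nfix_def del: One_nat_def)
    have e7: "v$3 - v$6 = 0" using e[of 7] by (simp add: ent coadj_ent sum8 sc_tab x0_def Nfix_def del: One_nat_def)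
    have z3: "v$3 = 0" using e3 e6 by simp
    have z6: "v$6 = 0" using e7 z3 by simp
    have z0: "v$0 = 0" using e0 z3 z6 by simp
    have z7: "v$7 = 0" using e6 z0 by simp
    show "v = 0\<^sub>v 8"
    proof (rule eq_vecI)
      show "dim_vec v = dim_vec (0\<^sub>v 8)" using v by simp
      fix i assume "i < dim_vec (0\<^sub>v 8)"
      then have "i < 8" by simp
      then show "v $ i = 0\<^sub>v 8 $ i" using z0 e4 e5 z3 e1 e2 z6 z7 by (auto dest!: less8)
    qed
  qed
  moreover have "vec_space.rank 8 (?A + Nfix) \<le> vec_space.rank 8 ?A + vec_space.rank 8 Nfix"
    by (rule vec_space.rank_subadditive[OF coadj_carrier]) (simp add: Nfix_def)
  ultimately show ?thesis using rank_Nfix by simp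
qed

lemma rank_le8: "vec_space.rank 8 (coadj_mat D x) \<le> 8"
  by (rule vec_space.rank_le_nc[OF coadj_carrier])

lemma Ninv_a: assumes "a \<noteq> -1" shows "Ninv (sc a) = 0"
proof -
  have "Max {vec_space.rank 8 (coadj_mat (sc a) x) | x. True} = 8"
  proof (rule Max_eqI)
    show "finite {vec_space.rank 8 (coadj_mat (sc a) x) | x. True}"
      by (rule finite_subset[of _ "{..8}"]) (auto simp: rank_le8)
    show "y \<le> 8" if "y \<in> {vec_space.rank 8 (coadj_mat (sc a) x) | x. True}" for y
      using that rank_le8 by auto
    show "8 \<in> {vec_space.rank 8 (coadj_mat (sc a) x) | x. True}"
      using full_rank_a[OF assms] by (metis (mono_tags, lifting) mem_Collect_eq)
  qed
  then show ?thesis by (simp add: Ninv_def)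
qed

lemma Ninv_m1: "Ninv (sc (-1)) = 2"
proof -
  have "Max {vec_space.rank 8 (coadj_mat (sc (-1)) x) | x. True} = 6"
  proof (rule Max_eqI)
    show "finite {vec_space.rank 8 (coadj_mat (sc (-1)) x) | x. True}"
      by (rule finite_subset[of _ "{..8}"]) (auto simp: rank_le8)
    show "y \<le> 6" if "y \<in> {vec_space.rank 8 (coadj_mat (sc (-1)) x) | x. True}" for y
      using that rank_m1_le by auto
    show "6 \<in> {vec_space.rank 8 (coadj_mat (sc (-1)) x) | x. True}"
      using rank_m1_ge rank_m1_le[of x0] by (metis (mono_tags, lifting) le_antisym mem_Collect_eq)
  qed
  then show ?thesis by (simp add: Ninv_def)
qed

theorem proposition2:
  shows "(\<forall>a::real. -1 < a \<and> a \<le> 1 \<longrightarrow>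
            linear_deformation8 (sc (-1)) (sc a) \<and> Ninv (sc a) = 0)
         \<and> Ninv (sc (-1)) = 2"
  using deform Ninv_a Ninv_m1 by auto

end
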